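(* Let $n\ge 2$. The number of (unordered) pairs of disjoint matrices from $\Sigma_{n^2}$ is equal to the number of (unordered) pairs of disjoint matrices from $\Pi_n$.
   Context: A binary matrix is a matrix with all entries in $\{0,1\}$. An $n^2\times n^2$ binary matrix $A$ is partitioned into $n^2$ non-intersecting $n\times n$ blocks $A_{kl}$, $1\le k,l\le n$ (so $A=[A_{kl}]$). $A$ is an S-permutation matrix if each row, each column and each block of $A$ contains exactly one $1$; $\Sigma_{n^2}$ is the set of these. Two binary matrices $A=(a_{ij}),B=(b_{ij})$ of the same size are disjoint if there are no $i,j$ with $a_{ij}=b_{ij}=1$. $\Pi_n$ is the set of all $n\times n$ matrices whose entries are ordered pairs $\langle i,j\rangle$ with $i,j\in[n]=\{1,\dots,n\}$, such that in each row the first coordinates form a permutation of $[n]$ and in each column the second coordinates form a permutation of $[n]$. Two matrices $\pi'=[p'_{ij}],\pi''=[p''_{ij}]\in\Pi_n$ are disjoint if $p'_{ij}\ne p''_{ij}$ for all $i,j\in[n]$. *)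

theory Defs
  imports "HOL-Library.FuncSet"
begin

text \<open>A binary n^2 x n^2 matrix is represented by the set of positions of its 1-entries,
  a subset of {0..<n^2} x {0..<n^2} (0-based indices). The block A_kl (0-based k,l < n)
  consists of the positions (i,j) with i div n = k and j div n = l.\<close>

definition S_perm_matrices :: "nat \<Rightarrow> (nat \<times> nat) set set" where
  "S_perm_matrices n = {A. A \<subseteq> {0..<n^2} \<times> {0..<n^2}
     \<and> (\<forall>i<n^2. \<exists>!j. (i, j) \<in> A)
     \<and> (\<forall>j<n^2. \<exists>!i. (i, j) \<in> A)
     \<and> (\<forall>k<n. \<forall>l<n. \<exists>!p. p \<in> A \<and> fst p div n = k \<and> snd p div n = l)}"

definition disjoint_bin :: "(nat \<times> nat) set \<Rightarrow> (nat \<times> nat) set \<Rightarrow> bool" where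
  "disjoint_bin A B \<longleftrightarrow> A \<inter> B = {}"

text \<open>Matrices in Pi_n: n x n matrices (0-based indices) with entries ordered pairs from
  {0..<n}, represented as extensional functions on {0..<n} x {0..<n}.\<close>

definition Pi_matrices :: "nat \<Rightarrow> (nat \<times> nat \<Rightarrow> nat \<times> nat) set" where
  "Pi_matrices n = {p. p \<in> ({0..<n} \<times> {0..<n}) \<rightarrow>\<^sub>E ({0..<n} \<times> {0..<n})
     \<and> (\<forall>i<n. bij_betw (\<lambda>j. fst (p (i, j))) {0..<n} {0..<n})
     \<and> (\<forall>j<n. bij_betw (\<lambda>i. snd (p (i, j))) {0..<n} {0..<n})}"

definition disjoint_Pi :: "nat \<Rightarrow> (nat \<times> nat \<Rightarrow> nat \<times> nat) \<Rightarrow> (nat \<times> nat \<Rightarrow> nat \<times> nat) \<Rightarrow> bool" where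
  "disjoint_Pi n p q \<longleftrightarrow> (\<forall>i<n. \<forall>j<n. p (i, j) \<noteq> q (i, j))"

end

theory Submission
  imports Defs
begin

lemma pairs_card:
  assumes bij: "bij_betw f S T"
    and D: "\<And>a b. a\<in>S \<Longrightarrow> b\<in>S \<Longrightarrow> D1 a b \<longleftrightarrow> D2 (f a) (f b)"
  shows "card {{a,b}|a b. a\<in>S \<and> b\<in>S \<and> D1 a b} = card {{p,q}|p q. p\<in>T \<and> q\<in>T \<and> D2 p q}"
proof -
  let ?P1 = "{{a,b}|a b. a\<in>S \<and> b\<in>S \<and> D1 a b}"
  let ?P2 = "{{p,q}|p q. p\<in>T \<and> q\<in>T \<and> D2 p q}"
  have inj: "inj_on f S" and img: "f ` S = T" using bij by (auto simp: bij_betw_def)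
  have "inj_on f (\<Union> ?P1)" by (rule inj_on_subset[OF inj]) auto
  hence i2: "inj_on ((`) f) ?P1" by (rule inj_on_image)
  have "(`) f ` ?P1 = ?P2"
  proof
    show "(`) f ` ?P1 \<subseteq> ?P2" using D img by auto
    show "?P2 \<subseteq> (`) f ` ?P1"
    proof
      fix X assume "X \<in> ?P2"
      then obtain p q where X: "X = {p,q}" "p\<in>T" "q\<in>T" "D2 p q" by blast
      then obtain a b where ab: "a\<in>S" "b\<in>S" "p = f a" "q = f b" using img by blast
      hence "{a,b} \<in> ?P1" using D X by blast
      moreover have "X = f ` {a,b}" using X ab by auto
      ultimately show "X \<in> (`) f ` ?P1" by blast
    qed
  qed
  thus ?thesis using card_image[OF i2] by simp
qed

lemma decode:
  fixes n k k' a a' :: nat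
  assumes "a < n" "a' < n" "k*n + a = k'*n + a'"
  shows "k = k' \<and> a = a'"
proof -
  have n: "n > 0" using assms by auto
  have "(k*n + a) div n = k" "(k*n+a) mod n = a" using assms(1) n by simp_all
  moreover have "(k'*n + a') div n = k'" "(k'*n+a') mod n = a'" using assms(2) n by simp_all
  moreover from assms(3) have "(k*n+a) div n = (k'*n+a') div n" "(k*n+a) mod n = (k'*n+a') mod n"
    by simp_all
  ultimately show ?thesis by simp
qed

lemma bound: "k < n \<Longrightarrow> a < (n::nat) \<Longrightarrow> k*n + a < n^2"
proof -
  assume "k<n" "a<n"
  hence "k*n + a < (k+1)*n" by simp
  also have "\<dots> \<le> n*n" using \<open>k<n\<close> by (intro mult_right_mono) auto
  finally show ?thesis by (simp add: power2_eq_square)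
qed

definition gmat :: "nat \<Rightarrow> (nat \<times> nat \<Rightarrow> nat \<times> nat) \<Rightarrow> (nat \<times> nat) set" where
  "gmat n p = {(k*n + fst (p (k,l)), l*n + snd (p (k,l))) | k l. k<n \<and> l<n}"

lemma Pi_range:
  assumes "p \<in> Pi_matrices n" "k<n" "l<n"
  shows "fst (p (k,l)) < n" "snd (p (k,l)) < n"
proof -
  have pe: "p \<in> ({0..<n} \<times> {0..<n}) \<rightarrow>\<^sub>E ({0..<n} \<times> {0..<n})"
    using assms unfolding Pi_matrices_def by auto
  have "p (k,l) \<in> {0..<n} \<times> {0..<n}" using PiE_mem[OF pe, of "(k,l)"] assms by auto
  thus "fst (p (k,l)) < n" "snd (p (k,l)) < n" by (auto simp: mem_Times_iff)
qed

lemma gmat_disj: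
  assumes "p \<in> Pi_matrices n" "q \<in> Pi_matrices n"
  shows "disjoint_bin (gmat n p) (gmat n q) \<longleftrightarrow> disjoint_Pi n p q"
proof
  assume d: "disjoint_bin (gmat n p) (gmat n q)"
  show "disjoint_Pi n p q" unfolding disjoint_Pi_def
  proof (intro allI impI notI)
    fix i j assume "i<n" "j<n" "p(i,j) = q(i,j)"
    have A: "(i*n + fst (p (i,j)), j*n + snd (p (i,j))) \<in> gmat n p"
      unfolding gmat_def using \<open>i<n\<close> \<open>j<n\<close> by blast
    have B: "(i*n + fst (q (i,j)), j*n + snd (q (i,j))) \<in> gmat n q"
      unfolding gmat_def using \<open>i<n\<close> \<open>j<n\<close> by blast
    from A B \<open>p(i,j) = q(i,j)\<close>
    have "(i*n + fst (p (i,j)), j*n + snd (p (i,j))) \<in> gmat n p \<inter> gmat n q" by simp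
    thus False using d unfolding disjoint_bin_def by blast
  qed
next
  assume d: "disjoint_Pi n p q"
  show "disjoint_bin (gmat n p) (gmat n q)" unfolding disjoint_bin_def
  proof (rule ccontr)
    assume "gmat n p \<inter> gmat n q \<noteq> {}"
    then obtain k l k' l' where kl: "k<n" "l<n" "k'<n" "l'<n"
      "k*n + fst (p (k,l)) = k'*n + fst (q (k',l'))"
      "l*n + snd (p (k,l)) = l'*n + snd (q (k',l'))"
      unfolding gmat_def by blast
    have r: "fst (p (k,l)) < n" "snd (p (k,l)) < n" "fst (q (k',l')) < n" "snd (q (k',l')) < n"
      using Pi_range assms kl by auto
    from decode[OF r(1) r(3) kl(5)] decode[OF r(2) r(4) kl(6)]
    have "k = k'" "l = l'" "p (k,l) = q(k,l)" by (auto simp: prod_eq_iff)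
    thus False using d kl unfolding disjoint_Pi_def by blast
  qed
qed

lemma gmat_inj:
  assumes "p \<in> Pi_matrices n" "q \<in> Pi_matrices n" "gmat n p = gmat n q"
  shows "p = q"
proof -
  have pe: "p \<in> ({0..<n} \<times> {0..<n}) \<rightarrow>\<^sub>E ({0..<n} \<times> {0..<n})"
   and qe: "q \<in> ({0..<n} \<times> {0..<n}) \<rightarrow>\<^sub>E ({0..<n} \<times> {0..<n})"
    using assms unfolding Pi_matrices_def by auto
  show ?thesis
  proof (rule extensionalityI)
    show "p \<in> extensional ({0..<n} \<times> {0..<n})" using pe by (simp add: PiE_iff)
    show "q \<in> extensional ({0..<n} \<times> {0..<n})" using qe by (simp add: PiE_iff)
    fix x assume "x \<in> {0..<n} \<times> {0..<n}"
    then obtain k l where x: "x = (k,l)" "k<n" "l<n" by auto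
    hence "(k*n + fst (p (k,l)), l*n + snd (p (k,l))) \<in> gmat n q"
      using assms(3) unfolding gmat_def by blast
    then obtain k' l' where kl: "k'<n" "l'<n"
      "k*n + fst (p (k,l)) = k'*n + fst (q (k',l'))"
      "l*n + snd (p (k,l)) = l'*n + snd (q (k',l'))"
      unfolding gmat_def by blast
    have r: "fst (p (k,l)) < n" "snd (p (k,l)) < n" "fst (q (k',l')) < n" "snd (q (k',l')) < n"
      using Pi_range assms x kl by auto
    from decode[OF r(1) r(3) kl(3)] decode[OF r(2) r(4) kl(4)]
    show "p x = q x" using x by (auto simp: prod_eq_iff)
  qed
qed


lemma gmat_iff:
  assumes pe: "p \<in> ({0..<n} \<times> {0..<n}) \<rightarrow>\<^sub>E ({0..<n} \<times> {0..<n})"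
  shows "(i,j) \<in> gmat n p \<longleftrightarrow> i < n^2 \<and> j < n^2 \<and> p (i div n, j div n) = (i mod n, j mod n)"
proof
  assume "(i,j) \<in> gmat n p"
  then obtain k l where kl: "k<n" "l<n" "i = k*n + fst (p (k,l))" "j = l*n + snd (p (k,l))"
    unfolding gmat_def by blast
  have "p (k,l) \<in> {0..<n} \<times> {0..<n}" using PiE_mem[OF pe, of "(k,l)"] kl by auto
  hence r: "fst (p (k,l)) < n" "snd (p (k,l)) < n" by (auto simp: mem_Times_iff)
  have n: "n > 0" using kl by auto
  have "i div n = k" "i mod n = fst (p (k,l))" "j div n = l" "j mod n = snd (p (k,l))"
    using kl r n by simp_all
  thus "i < n^2 \<and> j < n^2 \<and> p (i div n, j div n) = (i mod n, j mod n)"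
    using bound[OF kl(1) r(1)] bound[OF kl(2) r(2)] kl by simp
next
  assume h: "i < n^2 \<and> j < n^2 \<and> p (i div n, j div n) = (i mod n, j mod n)"
  have "i div n < n" "j div n < n" using h
    by (simp_all add: less_mult_imp_div_less power2_eq_square)
  moreover have "i = (i div n)*n + fst (p (i div n, j div n))"
       "j = (j div n)*n + snd (p (i div n, j div n))" using h by simp_all
  ultimately show "(i,j) \<in> gmat n p" unfolding gmat_def by blast
qed

lemma Pi_E: "p \<in> Pi_matrices n \<Longrightarrow> p \<in> ({0..<n} \<times> {0..<n}) \<rightarrow>\<^sub>E ({0..<n} \<times> {0..<n})"
  unfolding Pi_matrices_def by auto

lemma gmat_mem:
  assumes p: "p \<in> Pi_matrices n"
  shows "gmat n p \<in> S_perm_matrices n"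
proof -
  have pe: "p \<in> ({0..<n} \<times> {0..<n}) \<rightarrow>\<^sub>E ({0..<n} \<times> {0..<n})" using Pi_E[OF p] .
  note G = gmat_iff[OF pe]
  have row: "\<And>k. k<n \<Longrightarrow> bij_betw (\<lambda>j. fst (p (k, j))) {0..<n} {0..<n}"
   and col: "\<And>l. l<n \<Longrightarrow> bij_betw (\<lambda>i. snd (p (i, l))) {0..<n} {0..<n}"
    using p unfolding Pi_matrices_def by auto
  have rng: "\<And>k l. k<n \<Longrightarrow> l<n \<Longrightarrow> fst (p (k,l)) < n \<and> snd (p (k,l)) < n"
    using Pi_range[OF p] by auto
  have sub: "gmat n p \<subseteq> {0..<n^2} \<times> {0..<n^2}"
  proof
    fix x assume "x \<in> gmat n p"
    then obtain i j where "x = (i,j)" "(i,j) \<in> gmat n p" by (cases x) auto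
    thus "x \<in> {0..<n^2} \<times> {0..<n^2}" using G by auto
  qed
  have R: "\<exists>!j. (i, j) \<in> gmat n p" if i: "i < n^2" for i
  proof -
    have k: "i div n < n" using i by (simp add: less_mult_imp_div_less power2_eq_square)
    have n: "n > 0" using k by auto
    have "i mod n \<in> (\<lambda>j. fst (p (i div n, j))) ` {0..<n}"
      using n bij_betw_imp_surj_on[OF row[OF k]] by simp
    then obtain l where l: "l < n" "fst (p (i div n, l)) = i mod n" by auto
    let ?j = "l*n + snd (p (i div n, l))"
    have r: "snd (p (i div n, l)) < n" using rng k l by auto
    have jd: "?j div n = l" "?j mod n = snd (p (i div n, l))" using r by simp_all
    have "(i, ?j) \<in> gmat n p" using G i jd bound[OF l(1) r] l by (simp add: prod_eq_iff)
    moreover have "j' = ?j" if "(i,j') \<in> gmat n p" for j'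
    proof -
      have h: "j' < n^2" "p (i div n, j' div n) = (i mod n, j' mod n)" using that G by auto
      have l': "j' div n < n" using h by (simp add: less_mult_imp_div_less power2_eq_square)
      have "fst (p (i div n, j' div n)) = fst (p (i div n, l))" using h l by simp
      hence "j' div n = l"
        using inj_onD[OF bij_betw_imp_inj_on[OF row[OF k]]] l l' by simp
      moreover have "j' mod n = snd (p (i div n, l))" using h \<open>j' div n = l\<close> by simp
      ultimately show ?thesis by (metis div_mult_mod_eq jd)
    qed
    ultimately show ?thesis by blast
  qed
  have C: "\<exists>!i. (i, j) \<in> gmat n p" if j: "j < n^2" for j
  proof -
    have k: "j div n < n" using j by (simp add: less_mult_imp_div_less power2_eq_square)
    have n: "n > 0" using k by auto
    have "j mod n \<in> (\<lambda>i. snd (p (i, j div n))) ` {0..<n}"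
      using n bij_betw_imp_surj_on[OF col[OF k]] by simp
    then obtain l where l: "l < n" "snd (p (l, j div n)) = j mod n" by auto
    let ?i = "l*n + fst (p (l, j div n))"
    have r: "fst (p (l, j div n)) < n" using rng k l by auto
    have jd: "?i div n = l" "?i mod n = fst (p (l, j div n))" using r by simp_all
    have "(?i, j) \<in> gmat n p" using G j jd bound[OF l(1) r] l by (simp add: prod_eq_iff)
    moreover have "i' = ?i" if "(i',j) \<in> gmat n p" for i'
    proof -
      have h: "i' < n^2" "p (i' div n, j div n) = (i' mod n, j mod n)" using that G by auto
      have l': "i' div n < n" using h by (simp add: less_mult_imp_div_less power2_eq_square)
      have "snd (p (i' div n, j div n)) = snd (p (l, j div n))" using h l by simp
      hence "i' div n = l"
        using inj_onD[OF bij_betw_imp_inj_on[OF col[OF k]]] l l' by simp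
      moreover have "i' mod n = fst (p (l, j div n))" using h \<open>i' div n = l\<close> by simp
      ultimately show ?thesis by (metis div_mult_mod_eq jd)
    qed
    ultimately show ?thesis by blast
  qed
  have B: "\<exists>!q. q \<in> gmat n p \<and> fst q div n = k \<and> snd q div n = l" if kl: "k<n" "l<n" for k l
  proof -
    let ?q = "(k*n + fst (p (k,l)), l*n + snd (p (k,l)))"
    have r: "fst (p (k,l)) < n" "snd (p (k,l)) < n" using rng kl by auto
    have "?q \<in> gmat n p" unfolding gmat_def using kl by blast
    moreover have "fst ?q div n = k" "snd ?q div n = l" using r by simp_all
    moreover have "q = ?q" if "q \<in> gmat n p" "fst q div n = k" "snd q div n = l" for q
    proof -
      obtain i j where q: "q = (i,j)" by (cases q)
      have ij: "(i,j) \<in> gmat n p" "i div n = k" "j div n = l" using that q by simp_all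
      have h: "p (i div n, j div n) = (i mod n, j mod n)" using G ij(1) by blast
      have e1: "i = k*n + i mod n" using ij(2) div_mult_mod_eq[of i n] by metis
      have e2: "j = l*n + j mod n" using ij(3) div_mult_mod_eq[of j n] by metis
      have f: "fst (p (k,l)) = i mod n" "snd (p (k,l)) = j mod n" using h ij by simp_all
      show ?thesis unfolding q f using e1 e2 by metis
    qed
    ultimately show ?thesis by (intro ex1I[of _ ?q]) blast+
  qed
  show ?thesis unfolding S_perm_matrices_def
    by (intro CollectI conjI allI impI sub R C B)
qed


lemma E_range:
  fixes n k l :: nat
  assumes pe: "p \<in> ({0..<n} \<times> {0..<n}) \<rightarrow>\<^sub>E ({0..<n} \<times> {0..<n})" "k<n" "l<n"
  shows "fst (p (k,l)) < n \<and> snd (p (k,l)) < n"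
proof -
  have "p (k,l) \<in> {0..<n} \<times> {0..<n}" using PiE_mem[OF pe(1), of "(k,l)"] pe by auto
  thus ?thesis by (auto simp: mem_Times_iff)
qed

lemma gmat_surj:
  assumes A: "A \<in> S_perm_matrices n" and n: "n > 0"
  shows "\<exists>p\<in>Pi_matrices n. gmat n p = A"
proof -
  have Asub: "A \<subseteq> {0..<n^2} \<times> {0..<n^2}"
   and Arow: "\<And>i. i<n^2 \<Longrightarrow> \<exists>!j. (i, j) \<in> A"
   and Acol: "\<And>j. j<n^2 \<Longrightarrow> \<exists>!i. (i, j) \<in> A"
   and Ablk: "\<And>k l. k<n \<Longrightarrow> l<n \<Longrightarrow> \<exists>!q. q \<in> A \<and> fst q div n = k \<and> snd q div n = l"
    using A unfolding S_perm_matrices_def by auto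
  define t where "t k l = (THE q. q \<in> A \<and> fst q div n = k \<and> snd q div n = l)" for k l
  have tprop: "t k l \<in> A \<and> fst (t k l) div n = k \<and> snd (t k l) div n = l" if "k<n" "l<n" for k l
    unfolding t_def by (rule theI'[OF Ablk[OF that]])
  have tuniq: "t k l = q" if "k<n" "l<n" "q \<in> A" "fst q div n = k" "snd q div n = l" for k l q
    unfolding t_def by (rule the1_equality[OF Ablk[OF that(1,2)]]) (use that in blast)
  define p where "p = restrict (\<lambda>(k,l). (fst (t k l) mod n, snd (t k l) mod n)) ({0..<n} \<times> {0..<n})"
  have pe: "p \<in> ({0..<n} \<times> {0..<n}) \<rightarrow>\<^sub>E ({0..<n} \<times> {0..<n})"
    unfolding p_def restrict_PiE_iff using n by auto
  have pv: "p (k,l) = (fst (t k l) mod n, snd (t k l) mod n)" if "k<n" "l<n" for k l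
    unfolding p_def using that by simp
  note G = gmat_iff[OF pe]
  have gA: "gmat n p = A"
  proof (rule set_eqI)
    fix x :: "nat \<times> nat"
    obtain i j where x: "x = (i,j)" by (cases x)
    show "x \<in> gmat n p \<longleftrightarrow> x \<in> A"
    proof
      assume "x \<in> gmat n p"
      hence h: "i < n^2" "j < n^2" "p (i div n, j div n) = (i mod n, j mod n)" using G x by auto
      have k: "i div n < n" "j div n < n" using h
        by (simp_all add: less_mult_imp_div_less power2_eq_square)
      let ?t = "t (i div n) (j div n)"
      have tp: "?t \<in> A" "fst ?t div n = i div n" "snd ?t div n = j div n" using tprop[OF k] by auto
      have "fst ?t mod n = i mod n" "snd ?t mod n = j mod n" using h(3) pv[OF k] by auto
      hence "fst ?t = i" "snd ?t = j" using tp by (metis div_mult_mod_eq)+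
      hence "?t = (i,j)" by (simp add: prod_eq_iff)
      thus "x \<in> A" using tp x by simp
    next
      assume xA: "x \<in> A"
      hence h: "i < n^2" "j < n^2" using Asub x by auto
      have k: "i div n < n" "j div n < n" using h
        by (simp_all add: less_mult_imp_div_less power2_eq_square)
      have "t (i div n) (j div n) = (i,j)" using tuniq[OF k, of "(i,j)"] xA x by simp
      hence "p (i div n, j div n) = (i mod n, j mod n)" using pv[OF k] by simp
      thus "x \<in> gmat n p" using G h x by simp
    qed
  qed
  have rng: "\<And>k l. k<n \<Longrightarrow> l<n \<Longrightarrow> fst (p (k,l)) < n \<and> snd (p (k,l)) < n"
    using E_range[OF pe] by blast
  have inA: "(k*n + fst (p (k,l)), l*n + snd (p (k,l))) \<in> A" if "k<n" "l<n" for k l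
    using gA that unfolding gmat_def by blast
  have row: "bij_betw (\<lambda>l. fst (p (k, l))) {0..<n} {0..<n}" if k: "k<n" for k
  proof -
    have inj: "inj_on (\<lambda>l. fst (p (k, l))) {0..<n}"
    proof (rule inj_onI)
      fix l l' assume l: "l \<in> {0..<n}" "l' \<in> {0..<n}" and e: "fst (p (k, l)) = fst (p (k, l'))"
      have r: "fst (p (k,l)) < n" "snd (p (k,l)) < n" "snd (p (k,l')) < n" using rng k l by auto
      have i: "k*n + fst (p (k,l)) < n^2" using bound[OF k r(1)] .
      have "(k*n + fst (p (k,l)), l*n + snd (p (k,l))) \<in> A"
           "(k*n + fst (p (k,l)), l'*n + snd (p (k,l'))) \<in> A"
        using inA[OF k, of l] inA[OF k, of l'] l e by auto
      hence "l*n + snd (p (k,l)) = l'*n + snd (p (k,l'))" using Arow[OF i] by blast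
      thus "l = l'" using decode[OF r(2) r(3)] by blast
    qed
    have "(\<lambda>l. fst (p (k, l))) ` {0..<n} \<subseteq> {0..<n}" using rng k by auto
    hence "(\<lambda>l. fst (p (k, l))) ` {0..<n} = {0..<n}" using endo_inj_surj inj by blast
    thus ?thesis using inj unfolding bij_betw_def by blast
  qed
  have col: "bij_betw (\<lambda>k. snd (p (k, l))) {0..<n} {0..<n}" if l: "l<n" for l
  proof -
    have inj: "inj_on (\<lambda>k. snd (p (k, l))) {0..<n}"
    proof (rule inj_onI)
      fix k k' assume k: "k \<in> {0..<n}" "k' \<in> {0..<n}" and e: "snd (p (k, l)) = snd (p (k', l))"
      have r: "snd (p (k,l)) < n" "fst (p (k,l)) < n" "fst (p (k',l)) < n" using rng k l by auto
      have j: "l*n + snd (p (k,l)) < n^2" using bound[OF l r(1)] .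
      have "(k*n + fst (p (k,l)), l*n + snd (p (k,l))) \<in> A"
           "(k'*n + fst (p (k',l)), l*n + snd (p (k,l))) \<in> A"
        using inA[OF _ l, of k] inA[OF _ l, of k'] k e by auto
      hence "k*n + fst (p (k,l)) = k'*n + fst (p (k',l))" using Acol[OF j] by blast
      thus "k = k'" using decode[OF r(2) r(3)] by blast
    qed
    have "(\<lambda>k. snd (p (k, l))) ` {0..<n} \<subseteq> {0..<n}" using rng l by auto
    hence "(\<lambda>k. snd (p (k, l))) ` {0..<n} = {0..<n}" using endo_inj_surj inj by blast
    thus ?thesis using inj unfolding bij_betw_def by blast
  qed
  have "p \<in> Pi_matrices n" unfolding Pi_matrices_def using pe row col by blast
  thus ?thesis using gA by blast
qed

theorem mainTheorem2:
  fixes n :: nat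
  assumes "n \<ge> 2"
  shows "card {{A, B} | A B. A \<in> S_perm_matrices n \<and> B \<in> S_perm_matrices n \<and> disjoint_bin A B}
       = card {{p, q} | p q. p \<in> Pi_matrices n \<and> q \<in> Pi_matrices n \<and> disjoint_Pi n p q}"
proof -
  have n: "n > 0" using assms by simp
  have bij: "bij_betw (gmat n) (Pi_matrices n) (S_perm_matrices n)"
    unfolding bij_betw_def
  proof
    show "inj_on (gmat n) (Pi_matrices n)" by (rule inj_onI) (rule gmat_inj)
    show "gmat n ` Pi_matrices n = S_perm_matrices n"
      using gmat_mem gmat_surj[OF _ n] by blast
  qed
  have "card {{p, q} | p q. p \<in> Pi_matrices n \<and> q \<in> Pi_matrices n \<and> disjoint_Pi n p q}
      = card {{A, B} | A B. A \<in> S_perm_matrices n \<and> B \<in> S_perm_matrices n \<and> disjoint_bin A B}"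
    by (rule pairs_card[OF bij]) (simp add: gmat_disj)
  thus ?thesis by simp
qed

end
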